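(* Let $m\in\mathbb{N}$ and $\beta\in(1,m+1]$. Suppose that for every $x\in(0,\frac{m}{\beta-1})$ there exist $n\ge0$ and maps $a_1,\ldots,a_n\in\{T_{\beta,0},\ldots,T_{\beta,m}\}$ such that $(a_j\circ\cdots\circ a_1)(x)\in I_{\beta,m}$ for all $1\le j\le n$ and $(a_n\circ\cdots\circ a_1)(x)$ lies in the interior of some choice interval. Then $\Omega_{\beta,m}(x)$ is uncountable for every $x\in(0,\frac{m}{\beta-1})$.
   Context: $I_{\beta,m}=[0,\frac{m}{\beta-1}]$ and $T_{\beta,i}(x)=\beta x-i$ for $i\in\{0,\ldots,m\}$. $\Omega_{\beta,m}(x)$ is the set of sequences $(a_i)_{i=1}^\infty\in\{T_{\beta,0},\ldots,T_{\beta,m}\}^{\mathbb{N}}$ with $(a_n\circ\cdots\circ a_1)(x)\in I_{\beta,m}$ for all $n\in\mathbb{N}$. For $i\in\{1,\ldots,m\}$ the $i$-th choice interval is $[\frac{i}{\beta},\frac{(i-1)\beta+m-(i-1)}{\beta(\beta-1)}]$. *)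

theory Defs
  imports "HOL-Analysis.Analysis"
begin

definition I_beta :: "real \<Rightarrow> nat \<Rightarrow> real set" where
  "I_beta \<beta> m = {0 .. real m / (\<beta> - 1)}"

definition T_beta :: "real \<Rightarrow> nat \<Rightarrow> real \<Rightarrow> real" where
  "T_beta \<beta> i x = \<beta> * x - real i"

text \<open>A sequence of maps is encoded by its digit sequence a :: nat => nat
  (the map number k+1 is T_{beta, a k}); orbit \<beta> a x n = (a_n o ... o a_1)(x).\<close>
fun orbit :: "real \<Rightarrow> (nat \<Rightarrow> nat) \<Rightarrow> real \<Rightarrow> nat \<Rightarrow> real" where
  "orbit \<beta> a x 0 = x"
| "orbit \<beta> a x (Suc n) = T_beta \<beta> (a n) (orbit \<beta> a x n)"

definition Omega :: "real \<Rightarrow> nat \<Rightarrow> real \<Rightarrow> (nat \<Rightarrow> nat) set" where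
  "Omega \<beta> m x = {a. (\<forall>k. a k \<le> m) \<and> (\<forall>n\<ge>1. orbit \<beta> a x n \<in> I_beta \<beta> m)}"

definition choice_interval :: "real \<Rightarrow> nat \<Rightarrow> nat \<Rightarrow> real set" where
  "choice_interval \<beta> m i =
     {real i / \<beta> .. ((real i - 1) * \<beta> + real m - (real i - 1)) / (\<beta> * (\<beta> - 1))}"

end

theory Submission
  imports Defs
begin

lemma orbit_cong:
  "(\<And>k. k < j \<Longrightarrow> a k = b k) \<Longrightarrow> orbit \<beta> a x j = orbit \<beta> b x j"
  by (induction j) auto

lemma orbit_add:
  "orbit \<beta> a x (p + j) = orbit \<beta> (\<lambda>k. a (p + k)) (orbit \<beta> a x p) j"
  by (induction j) auto

lemma uncountable_bool_seq: "uncountable (UNIV :: (nat \<Rightarrow> bool) set)"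
proof
  assume "countable (UNIV :: (nat \<Rightarrow> bool) set)"
  then obtain f :: "nat \<Rightarrow> (nat \<Rightarrow> bool)" where f: "range f = UNIV"
    by (metis uncountable_def UNIV_not_empty)
  then obtain n where "f n = (\<lambda>k. \<not> f k k)" by (metis UNIV_I imageE)
  then have "f n n = (\<not> f n n)" by (rule fun_cong)
  then show False by simp
qed

locale beta_ctx =
  fixes \<beta> :: real and m :: nat and N :: "real \<Rightarrow> nat" and A :: "real \<Rightarrow> nat \<Rightarrow> nat"
    and C :: "real \<Rightarrow> nat"
  assumes b1: "1 < \<beta>"
    and good: "\<And>y. y \<in> {0 <..< real m / (\<beta> - 1)} \<Longrightarrow>
           (\<forall>k<N y. A y k \<le> m) \<and>
           (\<forall>j\<in>{1..N y}. orbit \<beta> (A y) y j \<in> I_beta \<beta> m) \<and>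
           C y \<in> {1..m} \<and> orbit \<beta> (A y) y (N y) \<in> interior (choice_interval \<beta> m (C y))"
begin

definition wd :: "real \<Rightarrow> bool \<Rightarrow> nat list" where
  "wd y b = map (A y) [0..<N y] @ [if b then C y else C y - 1]"

definition nxt :: "real \<Rightarrow> bool \<Rightarrow> real" where
  "nxt y b = orbit \<beta> (\<lambda>k. wd y b ! k) y (length (wd y b))"

lemma step:
  assumes y: "y \<in> {0 <..< real m / (\<beta> - 1)}"
  shows "\<forall>d\<in>set (wd y b). d \<le> m"
    and "\<forall>j\<in>{1..length (wd y b)}. orbit \<beta> (\<lambda>k. wd y b ! k) y j \<in> I_beta \<beta> m"
    and "nxt y b \<in> {0 <..< real m / (\<beta> - 1)}"
    and "length (wd y b) = Suc (N y)"
    and "wd y b ! N y = (if b then C y else C y - 1)"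
proof -
  note g = good[OF y]
  show "length (wd y b) = Suc (N y)" by (simp add: wd_def)
  show "wd y b ! N y = (if b then C y else C y - 1)" by (simp add: wd_def nth_append)
  show "\<forall>d\<in>set (wd y b). d \<le> m" using g by (auto simp: wd_def)
  have eqA: "orbit \<beta> (\<lambda>k. wd y b ! k) y j = orbit \<beta> (A y) y j" if "j \<le> N y" for j
    by (rule orbit_cong) (use that in \<open>auto simp: wd_def nth_append\<close>)
  define z where "z = orbit \<beta> (A y) y (N y)"
  define d where "d = (if b then C y else C y - 1)"
  have last: "orbit \<beta> (\<lambda>k. wd y b ! k) y (Suc (N y)) = \<beta> * z - real d"
    using eqA[of "N y"] by (simp add: T_beta_def z_def d_def wd_def nth_append)
  have C1: "1 \<le> C y" "C y \<le> m" using g by auto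
  have zi: "real (C y) / \<beta> < z" "z < ((real (C y) - 1) * \<beta> + real m - (real (C y) - 1)) / (\<beta> * (\<beta> - 1))"
    using g by (auto simp: z_def choice_interval_def)
  have bpos: "0 < \<beta>" "0 < \<beta> - 1" using b1 by auto
  have lo: "real (C y) < \<beta> * z" using zi(1) bpos by (simp add: field_simps)
  have hi: "(\<beta> * z - (real (C y) - 1)) * (\<beta> - 1) < real m"
  proof -
    have "z * (\<beta> * (\<beta> - 1)) < (real (C y) - 1) * \<beta> + real m - (real (C y) - 1)"
      using zi(2) bpos by (simp add: pos_less_divide_eq mult_pos_pos)
    then show ?thesis by (simp add: algebra_simps)
  qed
  have dr: "real d = real (C y) \<or> real d = real (C y) - 1"
    using C1 by (auto simp: d_def of_nat_diff)
  have "0 < \<beta> * z - real d" using lo dr by auto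
  moreover have "(\<beta> * z - real d) < real m / (\<beta> - 1)"
  proof -
    have "(\<beta> * z - real d) * (\<beta> - 1) < real m"
      using dr hi lo bpos
      by (smt (verit, ccfv_SIG) mult_right_mono)
    then show ?thesis using bpos by (simp add: pos_less_divide_eq)
  qed
  ultimately show nx: "nxt y b \<in> {0 <..< real m / (\<beta> - 1)}"
    using last by (simp add: nxt_def wd_def)
  show "\<forall>j\<in>{1..length (wd y b)}. orbit \<beta> (\<lambda>k. wd y b ! k) y j \<in> I_beta \<beta> m"
  proof
    fix j assume j: "j \<in> {1..length (wd y b)}"
    show "orbit \<beta> (\<lambda>k. wd y b ! k) y j \<in> I_beta \<beta> m"
    proof (cases "j \<le> N y")
      case True then show ?thesis using eqA[OF True] g j by auto
    next
      case False
      then have "j = length (wd y b)" using j by (simp add: wd_def)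
      then show ?thesis using nx by (simp add: nxt_def I_beta_def)
    qed
  qed
qed

fun stg :: "(nat \<Rightarrow> bool) \<Rightarrow> real \<Rightarrow> nat \<Rightarrow> nat list \<times> real" where
  "stg s x 0 = ([], x)"
| "stg s x (Suc n) = (fst (stg s x n) @ wd (snd (stg s x n)) (s n), nxt (snd (stg s x n)) (s n))"

lemma stg_inv:
  assumes x: "x \<in> {0 <..< real m / (\<beta> - 1)}"
  shows "snd (stg s x n) \<in> {0 <..< real m / (\<beta> - 1)} \<and> n \<le> length (fst (stg s x n)) \<and>
    (\<forall>d\<in>set (fst (stg s x n)). d \<le> m) \<and>
    (\<forall>j\<in>{1..length (fst (stg s x n))}. orbit \<beta> (\<lambda>k. fst (stg s x n) ! k) x j \<in> I_beta \<beta> m) \<and>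
    orbit \<beta> (\<lambda>k. fst (stg s x n) ! k) x (length (fst (stg s x n))) = snd (stg s x n)"
proof (induction n)
  case 0 then show ?case using x by simp
next
  case (Suc n)
  define w where "w = fst (stg s x n)"
  define y where "y = snd (stg s x n)"
  define u where "u = wd y (s n)"
  have IH: "y \<in> {0 <..< real m / (\<beta> - 1)}" "n \<le> length w" "\<forall>d\<in>set w. d \<le> m"
    "\<forall>j\<in>{1..length w}. orbit \<beta> (\<lambda>k. w ! k) x j \<in> I_beta \<beta> m"
    "orbit \<beta> (\<lambda>k. w ! k) x (length w) = y"
    using Suc.IH by (auto simp: w_def y_def)
  note st = step[OF IH(1), of "s n", folded u_def]
  have e1: "orbit \<beta> (\<lambda>k. (w @ u) ! k) x j = orbit \<beta> (\<lambda>k. w ! k) x j" if "j \<le> length w" for j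
    by (rule orbit_cong) (use that in \<open>auto simp: nth_append\<close>)
  have e2: "orbit \<beta> (\<lambda>k. (w @ u) ! k) x (length w + j) = orbit \<beta> (\<lambda>k. u ! k) y j" for j
  proof -
    have "orbit \<beta> (\<lambda>k. (w @ u) ! k) x (length w + j) =
       orbit \<beta> (\<lambda>k. (w @ u) ! (length w + k)) (orbit \<beta> (\<lambda>k. (w @ u) ! k) x (length w)) j"
      by (rule orbit_add)
    also have "\<dots> = orbit \<beta> (\<lambda>k. u ! k) y j"
      using e1[of "length w"] IH(5) by (simp add: nth_append)
    finally show ?thesis .
  qed
  have A1: "\<forall>j\<in>{1..length (w @ u)}. orbit \<beta> (\<lambda>k. (w @ u) ! k) x j \<in> I_beta \<beta> m"
  proof
    fix j assume j: "j \<in> {1..length (w @ u)}"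
    show "orbit \<beta> (\<lambda>k. (w @ u) ! k) x j \<in> I_beta \<beta> m"
    proof (cases "j \<le> length w")
      case True then show ?thesis using e1[OF True] IH(4) j by auto
    next
      case False
      define j' where "j' = j - length w"
      have "j = length w + j'" "1 \<le> j'" "j' \<le> length u"
        using j False by (auto simp: j'_def)
      then show ?thesis using e2[of j'] st(2) by auto
    qed
  qed
  have A2: "orbit \<beta> (\<lambda>k. (w @ u) ! k) x (length (w @ u)) = nxt y (s n)"
    using e2[of "length u"] by (simp add: nxt_def u_def)
  show ?case
    using st IH A1 A2 by (auto simp: w_def[symmetric] y_def[symmetric] u_def[symmetric])
qed

lemma stg_prefix: "n \<le> n' \<Longrightarrow> \<exists>v. fst (stg s x n') = fst (stg s x n) @ v"
proof (induction n' rule: dec_induct)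
  case base then show ?case by simp
next
  case (step k) then show ?case by auto
qed

lemma stg_dep: "(\<And>k. k < n \<Longrightarrow> s k = s' k) \<Longrightarrow> stg s x n = stg s' x n"
  by (induction n) auto

definition sq :: "real \<Rightarrow> (nat \<Rightarrow> bool) \<Rightarrow> nat \<Rightarrow> nat" where
  "sq x s k = fst (stg s x (Suc k)) ! k"

lemma sq_nth:
  assumes x: "x \<in> {0 <..< real m / (\<beta> - 1)}" and k: "k < length (fst (stg s x n))"
  shows "sq x s k = fst (stg s x n) ! k"
proof -
  define M where "M = max n (Suc k)"
  obtain v where v: "fst (stg s x M) = fst (stg s x n) @ v" using stg_prefix[of n M] M_def by auto
  obtain v' where v': "fst (stg s x M) = fst (stg s x (Suc k)) @ v'" using stg_prefix[of "Suc k" M] M_def by auto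
  have "Suc k \<le> length (fst (stg s x (Suc k)))" using stg_inv[OF x] by blast
  then have "fst (stg s x M) ! k = fst (stg s x (Suc k)) ! k" using v' by (simp add: nth_append del: stg.simps)
  moreover have "fst (stg s x M) ! k = fst (stg s x n) ! k" using v k by (simp add: nth_append)
  ultimately show ?thesis by (simp add: sq_def)
qed

lemma sq_Omega:
  assumes x: "x \<in> {0 <..< real m / (\<beta> - 1)}"
  shows "sq x s \<in> Omega \<beta> m x"
proof -
  have "sq x s k \<le> m" for k
  proof -
    have "Suc k \<le> length (fst (stg s x (Suc k)))" "\<forall>d\<in>set (fst (stg s x (Suc k))). d \<le> m"
      using stg_inv[OF x] by blast+
    then show ?thesis unfolding sq_def using nth_mem[of k "fst (stg s x (Suc k))"]
      by (auto simp del: stg.simps)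
  qed
  moreover have "orbit \<beta> (sq x s) x j \<in> I_beta \<beta> m" if "j \<ge> 1" for j
  proof -
    have inv: "j \<le> length (fst (stg s x j))"
      "\<forall>i\<in>{1..length (fst (stg s x j))}. orbit \<beta> (\<lambda>k. fst (stg s x j) ! k) x i \<in> I_beta \<beta> m"
      using stg_inv[OF x] by blast+
    have "orbit \<beta> (sq x s) x j = orbit \<beta> (\<lambda>k. fst (stg s x j) ! k) x j"
      by (rule orbit_cong) (use inv(1) sq_nth[OF x] in auto)
    then show ?thesis using inv that by auto
  qed
  ultimately show ?thesis by (simp add: Omega_def)
qed

lemma sq_inj:
  assumes x: "x \<in> {0 <..< real m / (\<beta> - 1)}"
  shows "inj (sq x)"
proof
  fix s s' assume eq: "sq x s = sq x s'"
  show "s = s'"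
  proof (rule ccontr)
    assume "s \<noteq> s'"
    then have ex: "\<exists>n. s n \<noteq> s' n" by auto
    define n where "n = (LEAST n. s n \<noteq> s' n)"
    have ne: "s n \<noteq> s' n" using LeastI_ex[OF ex] n_def by simp
    have "k < n \<Longrightarrow> s k = s' k" for k using not_less_Least n_def by blast
    then have same: "stg s x n = stg s' x n" by (rule stg_dep)
    define w where "w = fst (stg s x n)"
    define y where "y = snd (stg s x n)"
    have y: "y \<in> {0 <..< real m / (\<beta> - 1)}" using stg_inv[OF x] y_def by blast
    have W1: "fst (stg s x (Suc n)) = w @ wd y (s n)" by (simp add: w_def y_def)
    have W2: "fst (stg s' x (Suc n)) = w @ wd y (s' n)" using same by (simp add: w_def y_def)
    define p where "p = length w + N y"
    have lp: "p < length (fst (stg s x (Suc n)))" "p < length (fst (stg s' x (Suc n)))"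
      using W1 W2 step(4)[OF y] by (auto simp: p_def)
    have "sq x s p = fst (stg s x (Suc n)) ! p" by (rule sq_nth[OF x lp(1)])
    also have "\<dots> = (w @ wd y (s n)) ! p" by (simp only: W1)
    also have "\<dots> = wd y (s n) ! N y" by (simp add: p_def nth_append)
    also have "\<dots> = (if s n then C y else C y - 1)" by (rule step(5)[OF y])
    finally have r1: "sq x s p = (if s n then C y else C y - 1)" .
    have "sq x s' p = fst (stg s' x (Suc n)) ! p" by (rule sq_nth[OF x lp(2)])
    also have "\<dots> = (w @ wd y (s' n)) ! p" by (simp only: W2)
    also have "\<dots> = wd y (s' n) ! N y" by (simp add: p_def nth_append)
    also have "\<dots> = (if s' n then C y else C y - 1)" by (rule step(5)[OF y])
    finally have r2: "sq x s' p = (if s' n then C y else C y - 1)" .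
    note r1 r2
    moreover have "1 \<le> C y" using good[OF y] by auto
    ultimately show False using eq ne by (cases "s n"; cases "s' n"; auto)
  qed
qed

lemma uncountable_Omega:
  assumes x: "x \<in> {0 <..< real m / (\<beta> - 1)}"
  shows "uncountable (Omega \<beta> m x)"
proof
  assume c: "countable (Omega \<beta> m x)"
  have "range (sq x) \<subseteq> Omega \<beta> m x" using sq_Omega[OF x] by auto
  then have "countable (range (sq x))" using c countable_subset by blast
  then have "countable (UNIV :: (nat \<Rightarrow> bool) set)"
    using countable_image_inj_on sq_inj[OF x] by blast
  then show False using uncountable_bool_seq by blast
qed

end

theorem proposition2p3:
  fixes m :: nat and \<beta> :: real
  assumes "1 < \<beta>" and "\<beta> \<le> real m + 1"
    and "\<forall>x\<in>{0 <..< real m / (\<beta> - 1)}. \<exists>n::nat. \<exists>a::nat \<Rightarrow> nat.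
           (\<forall>k<n. a k \<le> m) \<and>
           (\<forall>j\<in>{1..n}. orbit \<beta> a x j \<in> I_beta \<beta> m) \<and>
           (\<exists>i\<in>{1..m}. orbit \<beta> a x n \<in> interior (choice_interval \<beta> m i))"
  shows "\<forall>x\<in>{0 <..< real m / (\<beta> - 1)}. uncountable (Omega \<beta> m x)"
proof -
  from assms(3) obtain N A C where
    h: "\<And>y. y \<in> {0 <..< real m / (\<beta> - 1)} \<Longrightarrow>
           (\<forall>k<N y. A y k \<le> m) \<and>
           (\<forall>j\<in>{1..N y}. orbit \<beta> (A y) y j \<in> I_beta \<beta> m) \<and>
           C y \<in> {1..m} \<and> orbit \<beta> (A y) y (N y) \<in> interior (choice_interval \<beta> m (C y))"
    by metis
  interpret beta_ctx \<beta> m N A C using assms(1) h by unfold_locales auto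
  show ?thesis using uncountable_Omega by blast
qed

end
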